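(* Let $0<\alpha_0\le\alpha<2$, $c_l,c_U>0$, let $\Omega\subset\mathbb{R}^d$ be bounded and open, and assume that $k$ satisfies condition (E$_\ge$) with constant $c_l$ and condition (U1) with constant $c_U$. Let $\varepsilon\in(0,1/2)$ be the constant of the small-term property. Let $y_0\in\Omega$, $r<\operatorname{dist}(y_0,\partial\Omega)/2$, $\rho<\varepsilon r/2$, and let $\eta:\mathbb{R}^d\to[0,1]$ be a smooth function with $\eta=1$ on $A^r_{\varepsilon r}(y_0)$, $\eta=0$ on $\mathbb{R}^d\setminus A^{3r/2}_{\varepsilon r/2}(y_0)$ and $|\nabla\eta|\le\frac4\varepsilon r^{-1}$. There is a constant $C$ depending only on $d,c_l,c_U,\alpha_0$ such that $$\int_{\mathbb{R}^d\setminus A^{3r/2}_{\varepsilon r/2}(y_0)}\int_{A^{3r/2}_{\varepsilon r/2}(y_0)}G_\rho(x,y_0)\eta^2(y)k(x,y)\,dy\,dx\le Cr^{d-\alpha}\sup_{A^{3r/2}_{\varepsilon r/2}(y_0)}G_\rho(\cdot,y_0),$$ and in particular $$\int_{\mathbb{R}^d\setminus A^{3r/2}_{\varepsilon r/2}(y_0)}\int_{A^{r}_{\varepsilon r}(y_0)}G_\rho(x,y_0)k(x,y)\,dy\,dx\le Cr^{d-\alpha}\sup_{A^{3r/2}_{\varepsilon r/2}(y_0)}G_\rho(\cdot,y_0).$$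
   Context: Throughout, $d\ge 3$ and $k:(\mathbb{R}^d\times\mathbb{R}^d)\setminus\{x=y\}\to[0,\infty)$ is a measurable function with $k(x,y)=k(y,x)$ and $\sup_{x\in\mathbb{R}^d}\int_{\mathbb{R}^d}(1\wedge|y-x|^2)k(x,y)\,dy<\infty$. For an open set $U\subset\mathbb{R}^d$ and measurable $u,v$, $\mathcal{E}_U(u,v)=\int_U\int_U(u(y)-u(x))(v(y)-v(x))k(x,y)\,dy\,dx$ (when finite), and $\mathcal{E}=\mathcal{E}_{\mathbb{R}^d}$. For $0<\alpha<2$ let $k^{(\alpha)}(x,y)=\frac{2^\alpha\Gamma((d+\alpha)/2)}{\pi^{d/2}|\Gamma(-\alpha/2)|}|y-x|^{-d-\alpha}$ and let $\mathcal{E}^\alpha_U$, $\mathcal{E}^\alpha$ denote the same forms with $k$ replaced by $k^{(\alpha)}$. $H(\mathbb{R}^d;k)=\{u\in L^2(\mathbb{R}^d):\mathcal{E}(u,u)<\infty\}$ and, for open $\Omega$, $H_\Omega(\mathbb{R}^d;k)=\{u\in H(\mathbb{R}^d;k): u=0\text{ a.e. on }\mathbb{R}^d\setminus\Omega\}$. Condition (E$_\ge$) with constant $c_l>0$: for every ball $B=B_r(x_0)\subset\mathbb{R}^d$ and every $u\in L^2(B)$, $\mathcal{E}_B(u,u)\ge c_l\,\mathcal{E}^\alpha_B(u,u)$. Condition (U1) with constant $c_U>0$: for all $r>0$, $\sup_{x\in\mathbb{R}^d}\int_{\mathbb{R}^d}(r^2\wedge|y-x|^2)k(x,y)\,dy\le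 c_U r^{2-\alpha}$. Regularized Green function: for bounded open $\Omega$, $k$ satisfying (E$_\ge$), $y_0\in\Omega$ and $\rho>0$ with $B_\rho(y_0)\subset\Omega$, $G_\rho(\cdot,y_0)$ denotes the unique function in $H_\Omega(\mathbb{R}^d;k)$ with $\mathcal{E}(G_\rho(\cdot,y_0),\varphi)=\fint_{B_\rho(y_0)}\varphi\,dx$ for all $\varphi\in H_\Omega(\mathbb{R}^d;k)$; it is nonnegative (and continuous in $\Omega\setminus\overline{B_\rho(y_0)}$). Annuli: $A^R_s(y_0)=B_R(y_0)\setminus B_s(y_0)$. The constant $\varepsilon$ (small-term property): $\varepsilon\in(0,1/2)$ is a number depending only on $d,c_l,c_U,\alpha_0$ such that $\int_{B_{\varepsilon r}(y_0)}\int_{\mathbb{R}^d\setminus B_r(y_0)}G_\rho(x,y_0)k(x,y)\,dy\,dx\le 1/4$ for all $y_0\in\Omega$, $r<\operatorname{dist}(y_0,\partial\Omega)$ and $\rho>0$ with $B_\rho(y_0)\subset\Omega$. *)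

theory Defs
  imports "HOL-Analysis.Analysis"
begin

definition kernel_std :: "('a::euclidean_space \<Rightarrow> 'a \<Rightarrow> real) \<Rightarrow> bool" where
  "kernel_std k \<longleftrightarrow>
     (\<lambda>(x,y). k x y) \<in> borel_measurable (lborel \<Otimes>\<^sub>M lborel) \<and>
     (\<forall>x y. x \<noteq> y \<longrightarrow> 0 \<le> k x y \<and> k x y = k y x) \<and>
     (SUP x. \<integral>\<^sup>+ y. ennreal (min 1 ((norm (y - x))\<^sup>2) * k x y) \<partial>lborel) < \<infinity>"

definition kalpha :: "real \<Rightarrow> 'a::euclidean_space \<Rightarrow> 'a \<Rightarrow> real" where
  "kalpha \<alpha> x y =
     2 powr \<alpha> * Gamma ((real DIM('a) + \<alpha>) / 2)
       / (pi powr (real DIM('a) / 2) * \<bar>Gamma (- \<alpha> / 2)\<bar>)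
       * norm (y - x) powr (- real DIM('a) - \<alpha>)"

definition Eq :: "'a::euclidean_space set \<Rightarrow> ('a \<Rightarrow> 'a \<Rightarrow> real) \<Rightarrow> ('a \<Rightarrow> real) \<Rightarrow> ennreal" where
  "Eq U k u = (\<integral>\<^sup>+ x. indicator U x *
       (\<integral>\<^sup>+ y. indicator U y * ennreal ((u y - u x)\<^sup>2 * k x y) \<partial>lborel) \<partial>lborel)"

definition Ebil :: "('a::euclidean_space \<Rightarrow> 'a \<Rightarrow> real) \<Rightarrow> ('a \<Rightarrow> real) \<Rightarrow> ('a \<Rightarrow> real) \<Rightarrow> real" where
  "Ebil k u v = (\<integral> x. (\<integral> y. (u y - u x) * (v y - v x) * k x y \<partial>lborel) \<partial>lborel)"

definition L2on :: "'a::euclidean_space set \<Rightarrow> ('a \<Rightarrow> real) \<Rightarrow> bool" where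
  "L2on B u \<longleftrightarrow> u \<in> borel_measurable lborel \<and>
     (\<integral>\<^sup>+ x. indicator B x * ennreal ((u x)\<^sup>2) \<partial>lborel) < \<infinity>"

definition cond_Ege :: "real \<Rightarrow> real \<Rightarrow> ('a::euclidean_space \<Rightarrow> 'a \<Rightarrow> real) \<Rightarrow> bool" where
  "cond_Ege cl \<alpha> k \<longleftrightarrow> (\<forall>x0 r u. L2on (ball x0 r) u \<longrightarrow>
      Eq (ball x0 r) k u \<ge> ennreal cl * Eq (ball x0 r) (kalpha \<alpha>) u)"

definition cond_U1 :: "real \<Rightarrow> real \<Rightarrow> ('a::euclidean_space \<Rightarrow> 'a \<Rightarrow> real) \<Rightarrow> bool" where
  "cond_U1 cU \<alpha> k \<longleftrightarrow> (\<forall>r>0. \<forall>x.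
      (\<integral>\<^sup>+ y. ennreal (min (r\<^sup>2) ((norm (y - x))\<^sup>2) * k x y) \<partial>lborel) \<le> ennreal (cU * r powr (2 - \<alpha>)))"

definition H_space :: "('a::euclidean_space \<Rightarrow> 'a \<Rightarrow> real) \<Rightarrow> ('a \<Rightarrow> real) \<Rightarrow> bool" where
  "H_space k u \<longleftrightarrow> L2on UNIV u \<and> Eq UNIV k u < \<infinity>"

definition H_Omega :: "'a::euclidean_space set \<Rightarrow> ('a \<Rightarrow> 'a \<Rightarrow> real) \<Rightarrow> ('a \<Rightarrow> real) \<Rightarrow> bool" where
  "H_Omega \<Omega> k u \<longleftrightarrow> H_space k u \<and> (AE x in lborel. x \<notin> \<Omega> \<longrightarrow> u x = 0)"

text \<open>G is (the nonnegative representative, continuous off the closed ball, of) the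
  regularized Green function G_rho(., y0) of k on Omega.\<close>
definition is_reg_green :: "('a::euclidean_space \<Rightarrow> 'a \<Rightarrow> real) \<Rightarrow> 'a set \<Rightarrow> 'a \<Rightarrow> real \<Rightarrow> ('a \<Rightarrow> real) \<Rightarrow> bool" where
  "is_reg_green k \<Omega> y0 \<rho> G \<longleftrightarrow>
     H_Omega \<Omega> k G \<and>
     (\<forall>\<phi>. H_Omega \<Omega> k \<phi> \<longrightarrow>
        Ebil k G \<phi> = (\<integral> x. indicator (ball y0 \<rho>) x * \<phi> x \<partial>lborel) / measure lborel (ball y0 \<rho>)) \<and>
     (\<forall>x. 0 \<le> G x) \<and> continuous_on (\<Omega> - cball y0 \<rho>) G"

definition annulus :: "'a::metric_space \<Rightarrow> real \<Rightarrow> real \<Rightarrow> 'a set" where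
  "annulus y0 R s = ball y0 R - ball y0 s"

fun partials :: "nat \<Rightarrow> ('a::euclidean_space \<Rightarrow> real) \<Rightarrow> ('a \<Rightarrow> real) set" where
  "partials 0 f = {f}"
| "partials (Suc n) f = {(\<lambda>x. frechet_derivative g (at x) b) | g b. g \<in> partials n f \<and> b \<in> Basis}"

definition smooth_fun :: "('a::euclidean_space \<Rightarrow> real) \<Rightarrow> bool" where
  "smooth_fun f \<longleftrightarrow> (\<forall>n. \<forall>g\<in>partials n f. \<forall>x. g differentiable (at x))"

end

theory Submission
  imports Defs
begin


lemma iter_zero:
  fixes f :: "'a::euclidean_space \<Rightarrow> 'a \<Rightarrow> real"
  assumes meas: "(\<lambda>(x,y). f x y) \<in> borel_measurable (lborel \<Otimes>\<^sub>M lborel)"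
    and fin: "(\<integral>\<^sup>+x. \<integral>\<^sup>+y. ennreal \<bar>f x y\<bar> \<partial>lborel \<partial>lborel) < \<infinity>"
    and zero: "(\<integral>x. \<integral>y. f x y \<partial>lborel \<partial>lborel) = 0"
  shows "(\<integral>\<^sup>+x. \<integral>\<^sup>+y. ennreal (f x y) \<partial>lborel \<partial>lborel) = (\<integral>\<^sup>+x. \<integral>\<^sup>+y. ennreal (- f x y) \<partial>lborel \<partial>lborel)"
proof -
  have m2: "(\<lambda>(x,y). ennreal (g x y)) \<in> borel_measurable (lborel \<Otimes>\<^sub>M lborel)"
    if "(\<lambda>(x,y). g x y) \<in> borel_measurable (lborel \<Otimes>\<^sub>M lborel)" for g :: "'a \<Rightarrow> 'a \<Rightarrow> real"
    using that by measurable
  have it: "(\<integral>\<^sup>+x. \<integral>\<^sup>+y. ennreal (g x y) \<partial>lborel \<partial>lborel) = (\<integral>\<^sup>+p. ennreal (g (fst p) (snd p)) \<partial>(lborel \<Otimes>\<^sub>M lborel))"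
    if "(\<lambda>(x,y). g x y) \<in> borel_measurable (lborel \<Otimes>\<^sub>M lborel)" for g :: "'a \<Rightarrow> 'a \<Rightarrow> real"
    using lborel.nn_integral_fst[OF m2[OF that]] by (simp add: case_prod_beta')
  have mabs: "(\<lambda>(x,y). \<bar>f x y\<bar>) \<in> borel_measurable (lborel \<Otimes>\<^sub>M lborel)"
    using meas by measurable
  have mneg: "(\<lambda>(x,y). - f x y) \<in> borel_measurable (lborel \<Otimes>\<^sub>M lborel)"
    using meas by measurable
  have int: "integrable (lborel \<Otimes>\<^sub>M lborel) (\<lambda>(x,y). f x y)"
  proof (rule integrableI_bounded)
    show "(\<lambda>(x,y). f x y) \<in> borel_measurable (lborel \<Otimes>\<^sub>M lborel)" by (rule meas)
    have "(\<integral>\<^sup>+ p. ennreal (norm ((\<lambda>(x,y). f x y) p)) \<partial>(lborel \<Otimes>\<^sub>M lborel))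
        = (\<integral>\<^sup>+x. \<integral>\<^sup>+y. ennreal \<bar>f x y\<bar> \<partial>lborel \<partial>lborel)"
      using it[OF mabs] by (simp add: case_prod_beta')
    then show "(\<integral>\<^sup>+ p. ennreal (norm ((\<lambda>(x,y). f x y) p)) \<partial>(lborel \<Otimes>\<^sub>M lborel)) < \<infinity>"
      using fin by simp
  qed
  have "(\<integral>x. \<integral>y. f x y \<partial>lborel \<partial>lborel) = integral\<^sup>L (lborel \<Otimes>\<^sub>M lborel) (\<lambda>(x,y). f x y)"
    by (rule lborel_pair.integral_fst[OF int])
  also have "\<dots> = enn2real (\<integral>\<^sup>+p. ennreal ((\<lambda>(x,y). f x y) p) \<partial>(lborel \<Otimes>\<^sub>M lborel))
      - enn2real (\<integral>\<^sup>+p. ennreal (- (\<lambda>(x,y). f x y) p) \<partial>(lborel \<Otimes>\<^sub>M lborel))"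
    by (rule real_lebesgue_integral_def[OF int])
  finally have eq: "enn2real (\<integral>\<^sup>+p. ennreal ((\<lambda>(x,y). f x y) p) \<partial>(lborel \<Otimes>\<^sub>M lborel))
      = enn2real (\<integral>\<^sup>+p. ennreal (- (\<lambda>(x,y). f x y) p) \<partial>(lborel \<Otimes>\<^sub>M lborel))"
    using zero by simp
  have P: "(\<integral>\<^sup>+p. ennreal ((\<lambda>(x,y). f x y) p) \<partial>(lborel \<Otimes>\<^sub>M lborel)) = (\<integral>\<^sup>+x. \<integral>\<^sup>+y. ennreal (f x y) \<partial>lborel \<partial>lborel)"
    using it[OF meas] by (simp add: case_prod_beta')
  have N: "(\<integral>\<^sup>+p. ennreal (- (\<lambda>(x,y). f x y) p) \<partial>(lborel \<Otimes>\<^sub>M lborel)) = (\<integral>\<^sup>+x. \<integral>\<^sup>+y. ennreal (- f x y) \<partial>lborel \<partial>lborel)"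
    using it[OF mneg] by (simp add: case_prod_beta')
  have le1: "(\<integral>\<^sup>+x. \<integral>\<^sup>+y. ennreal (f x y) \<partial>lborel \<partial>lborel) \<le> (\<integral>\<^sup>+x. \<integral>\<^sup>+y. ennreal \<bar>f x y\<bar> \<partial>lborel \<partial>lborel)"
    by (intro nn_integral_mono) auto
  have le2: "(\<integral>\<^sup>+x. \<integral>\<^sup>+y. ennreal (- f x y) \<partial>lborel \<partial>lborel) \<le> (\<integral>\<^sup>+x. \<integral>\<^sup>+y. ennreal \<bar>f x y\<bar> \<partial>lborel \<partial>lborel)"
    by (intro nn_integral_mono) auto
  have f1: "(\<integral>\<^sup>+x. \<integral>\<^sup>+y. ennreal (f x y) \<partial>lborel \<partial>lborel) < \<infinity>" using le1 fin by (rule le_less_trans)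
  have f2: "(\<integral>\<^sup>+x. \<integral>\<^sup>+y. ennreal (- f x y) \<partial>lborel \<partial>lborel) < \<infinity>" using le2 fin by (rule le_less_trans)
  show ?thesis
  proof -
    have "ennreal (enn2real (\<integral>\<^sup>+x. \<integral>\<^sup>+y. ennreal (f x y) \<partial>lborel \<partial>lborel)) = ennreal (enn2real (\<integral>\<^sup>+x. \<integral>\<^sup>+y. ennreal (- f x y) \<partial>lborel \<partial>lborel))"
      using eq unfolding P N by simp
    then show ?thesis using f1 f2 unfolding infinity_ennreal_def by simp
  qed
qed



lemma pt_both1:
  fixes g0 g1 a b M :: real
  assumes "0 \<le> g0" "g0 \<le> M" "0 \<le> g1" "g1 \<le> M" "0 \<le> a" "a \<le> 1" "0 \<le> b" "b \<le> 1"
  shows "(g1-g0)*(a\<^sup>2*(2*M-g1) - b\<^sup>2*(2*M-g0)) \<le> 4*M\<^sup>2*(a-b)\<^sup>2"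
proof -
  define c where "c = (4*M - g1 - g0)/2"
  have c: "0 \<le> c" "c \<le> 2*M" using assms by (auto simp: c_def)
  have e: "(g1-g0)*(a\<^sup>2*(2*M-g1) - b\<^sup>2*(2*M-g0)) = (g1-g0)*(a+b)*(c*(a-b)) - (a\<^sup>2+b\<^sup>2)*(g1-g0)\<^sup>2/2"
    by (simp add: c_def power2_eq_square field_simps)
  have y: "(g1-g0)*(a+b)*(c*(a-b)) \<le> ((g1-g0)*(a+b))\<^sup>2/4 + (c*(a-b))\<^sup>2"
  proof -
    have "0 \<le> ((g1-g0)*(a+b)/2 - c*(a-b))\<^sup>2" by simp
    then show ?thesis by (simp add: power2_eq_square algebra_simps)
  qed
  have s: "((g1-g0)*(a+b))\<^sup>2/4 \<le> (a\<^sup>2+b\<^sup>2)*(g1-g0)\<^sup>2/2"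
  proof -
    have "0 \<le> (a-b)\<^sup>2" by simp
    then have "(a+b)\<^sup>2 \<le> 2*(a\<^sup>2+b\<^sup>2)" by (simp add: power2_eq_square algebra_simps)
    then have "(a+b)\<^sup>2 * (g1-g0)\<^sup>2 \<le> 2*(a\<^sup>2+b\<^sup>2) * (g1-g0)\<^sup>2" by (intro mult_right_mono) auto
    then have i: "(a+b)\<^sup>2 * (g1-g0)\<^sup>2 \<le> 2*((a\<^sup>2+b\<^sup>2) * (g1-g0)\<^sup>2)" by (simp only: mult.assoc)
    have "((g1-g0)*(a+b))\<^sup>2 = (a+b)\<^sup>2 * (g1-g0)\<^sup>2" by (simp add: power_mult_distrib)
    then show ?thesis using i by linarith
  qed
  have t: "(c*(a-b))\<^sup>2 \<le> 4*M\<^sup>2*(a-b)\<^sup>2"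
  proof -
    have "c\<^sup>2 \<le> (2*M)\<^sup>2" using c by (intro power_mono) auto
    then have "c\<^sup>2*(a-b)\<^sup>2 \<le> (2*M)\<^sup>2*(a-b)\<^sup>2" by (intro mult_right_mono) auto
    then show ?thesis by (simp add: power_mult_distrib)
  qed
  show ?thesis using e y s t by linarith
qed

lemma pt_both2:
  fixes g0 g1 a b M :: real
  assumes "0 \<le> g0" "g0 \<le> M" "0 \<le> g1" "g1 \<le> M" "0 \<le> a" "a \<le> 1" "0 \<le> b" "b \<le> 1"
  shows "(a\<^sup>2*(2*M-g1) - b\<^sup>2*(2*M-g0))\<^sup>2 \<le> 2*(g1-g0)\<^sup>2 + 32*M\<^sup>2*(a-b)\<^sup>2"
proof -
  have e: "a\<^sup>2*(2*M-g1) - b\<^sup>2*(2*M-g0) = (- a\<^sup>2*(g1-g0)) + ((2*M-g0)*(a+b))*(a-b)"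
    by (simp add: power2_eq_square algebra_simps)
  have u: "\<bar>- a\<^sup>2*(g1-g0)\<bar> \<le> \<bar>g1-g0\<bar>"
  proof -
    have "a\<^sup>2 \<le> 1" using assms by (simp add: power_le_one)
    then show ?thesis using assms by (simp add: abs_mult mult_left_le_one_le)
  qed
  have v: "\<bar>((2*M-g0)*(a+b))*(a-b)\<bar> \<le> 4*M*\<bar>a-b\<bar>"
  proof -
    have q: "(2*M-g0)*(a+b) \<le> (2*M)*2" using assms by (intro mult_mono) auto
    have "0 \<le> (2*M-g0)*(a+b)" using assms by auto
    then have "\<bar>(2*M-g0)*(a+b)\<bar> \<le> 4*M" using q by simp
    then show ?thesis by (simp add: abs_mult mult_right_mono)
  qed
  have "(a\<^sup>2*(2*M-g1) - b\<^sup>2*(2*M-g0))\<^sup>2 \<le> (\<bar>g1-g0\<bar> + 4*M*\<bar>a-b\<bar>)\<^sup>2"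
  proof -
    have "\<bar>(- a\<^sup>2*(g1-g0)) + ((2*M-g0)*(a+b))*(a-b)\<bar> \<le> \<bar>g1-g0\<bar> + 4*M*\<bar>a-b\<bar>"
      using u v abs_triangle_ineq[of "- a\<^sup>2*(g1-g0)" "((2*M-g0)*(a+b))*(a-b)"] by linarith
    then have "\<bar>(- a\<^sup>2*(g1-g0)) + ((2*M-g0)*(a+b))*(a-b)\<bar>\<^sup>2 \<le> (\<bar>g1-g0\<bar> + 4*M*\<bar>a-b\<bar>)\<^sup>2"
      by (intro power_mono) auto
    then show ?thesis unfolding e by simp
  qed
  also have "\<dots> \<le> 2*(g1-g0)\<^sup>2 + 32*M\<^sup>2*(a-b)\<^sup>2"
  proof -
    define uu where "uu = \<bar>g1-g0\<bar>"
    define vv where "vv = 4*M*\<bar>a-b\<bar>"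
    have "0 \<le> (uu - vv)\<^sup>2" by simp
    then have i: "(uu+vv)\<^sup>2 \<le> 2*uu\<^sup>2 + 2 * vv\<^sup>2" by (simp add: power2_eq_square algebra_simps)
    have "uu\<^sup>2 = (g1-g0)\<^sup>2" by (simp add: uu_def)
    moreover have "vv\<^sup>2 = 16*(M\<^sup>2*(a-b)\<^sup>2)" by (simp add: vv_def power_mult_distrib)
    moreover have "(\<bar>g1-g0\<bar> + 4*M*\<bar>a-b\<bar>)\<^sup>2 = (uu+vv)\<^sup>2" by (simp add: uu_def vv_def)
    ultimately show ?thesis using i by linarith
  qed
  finally show ?thesis .
qed

lemma pt_cross1:
  fixes g0 g1 a M :: real
  assumes "0 \<le> g0" "0 \<le> g1" "g1 \<le> M" "0 \<le> a" "a \<le> 1" "0 < M"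
  shows "M*(g0*a\<^sup>2) + (g1-g0)*(a\<^sup>2*(2*M-g1) - 0\<^sup>2*(2*M-g0)) \<le> 4*M\<^sup>2*(a-0)\<^sup>2"
    and "(a\<^sup>2*(2*M-g1) - 0\<^sup>2*(2*M-g0))\<^sup>2 \<le> 2*(g1-g0)\<^sup>2 + 32*M\<^sup>2*(a-0)\<^sup>2"
proof -
  have "M*(g0*a\<^sup>2) + (g1-g0)*(a\<^sup>2*(2*M-g1)) = a\<^sup>2*(g1*(2*M-g1) - g0*(M-g1))"
    by (simp add: algebra_simps)
  also have "\<dots> \<le> a\<^sup>2*(2*M\<^sup>2)"
  proof (intro mult_left_mono)
    have "g1*(2*M-g1) \<le> M*(2*M)" using assms by (intro mult_mono) auto
    moreover have "0 \<le> g0*(M-g1)" using assms by auto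
    ultimately show "g1*(2*M-g1) - g0*(M-g1) \<le> 2*M\<^sup>2" by (simp add: power2_eq_square)
  qed simp
  finally have F: "M*(g0*a\<^sup>2) + (g1-g0)*(a\<^sup>2*(2*M-g1)) \<le> a\<^sup>2*(2*M\<^sup>2)" .
  have e1: "a\<^sup>2*(2*M\<^sup>2) = 2*(a\<^sup>2*M\<^sup>2)" by simp
  have e2: "4*M\<^sup>2*(a-0)\<^sup>2 = 4*(a\<^sup>2*M\<^sup>2)" by simp
  have "0 \<le> a\<^sup>2*M\<^sup>2" by simp
  then show "M*(g0*a\<^sup>2) + (g1-g0)*(a\<^sup>2*(2*M-g1) - 0\<^sup>2*(2*M-g0)) \<le> 4*M\<^sup>2*(a-0)\<^sup>2"
  proof -
    have "(g1-g0)*(a\<^sup>2*(2*M-g1) - 0\<^sup>2*(2*M-g0)) = (g1-g0)*(a\<^sup>2*(2*M-g1))" by simp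
    then show ?thesis using F e1 e2 \<open>0 \<le> a\<^sup>2*M\<^sup>2\<close> by linarith
  qed
  have "a\<^sup>2*(2*M-g1) \<le> a*(2*M)" "0 \<le> a\<^sup>2*(2*M-g1)"
    using assms by (auto intro!: mult_mono simp: power2_eq_square mult_left_le_one_le)
  then have "(a\<^sup>2*(2*M-g1))\<^sup>2 \<le> (a*(2*M))\<^sup>2" by (intro power_mono) auto
  then show "(a\<^sup>2*(2*M-g1) - 0\<^sup>2*(2*M-g0))\<^sup>2 \<le> 2*(g1-g0)\<^sup>2 + 32*M\<^sup>2*(a-0)\<^sup>2"
  proof -
    have "0 \<le> 2*(g1-g0)\<^sup>2" by simp
    have h1: "(a*(2*M))\<^sup>2 = 4*(M\<^sup>2*a\<^sup>2)" by (simp add: power_mult_distrib)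
    have h2: "32*M\<^sup>2*(a-0)\<^sup>2 = 32*(M\<^sup>2*a\<^sup>2)" by simp
    have h3: "0 \<le> M\<^sup>2*a\<^sup>2" by simp
    have h4: "(a\<^sup>2*(2*M-g1) - 0\<^sup>2*(2*M-g0))\<^sup>2 = (a\<^sup>2*(2*M-g1))\<^sup>2" by simp
    show ?thesis using h1 h2 h3 h4 \<open>(a\<^sup>2*(2*M-g1))\<^sup>2 \<le> (a*(2*M))\<^sup>2\<close> \<open>0 \<le> 2*(g1-g0)\<^sup>2\<close> by linarith
  qed
qed

lemma pt_cross2:
  fixes g0 g1 b M :: real
  assumes "0 \<le> g0" "g0 \<le> M" "0 \<le> g1" "0 \<le> b" "b \<le> 1" "0 < M"
  shows "(g1-g0)*(0\<^sup>2*(2*M-g1) - b\<^sup>2*(2*M-g0)) \<le> 4*M\<^sup>2*(0-b)\<^sup>2"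
    and "(0\<^sup>2*(2*M-g1) - b\<^sup>2*(2*M-g0))\<^sup>2 \<le> 2*(g1-g0)\<^sup>2 + 32*M\<^sup>2*(0-b)\<^sup>2"
proof -
  have "(g1-g0)*(0\<^sup>2*(2*M-g1) - b\<^sup>2*(2*M-g0)) = (g0 - g1) * (b\<^sup>2*(2*M-g0))" by (simp add: algebra_simps)
  also have "\<dots> \<le> M * (b\<^sup>2*(2*M))"
    using assms by (intro mult_mono) (auto simp: mult_left_mono)
  also have "\<dots> \<le> 4*M\<^sup>2*(0-b)\<^sup>2" using assms by (simp add: power2_eq_square)
  finally show "(g1-g0)*(0\<^sup>2*(2*M-g1) - b\<^sup>2*(2*M-g0)) \<le> 4*M\<^sup>2*(0-b)\<^sup>2" .
  have "b\<^sup>2*(2*M-g0) \<le> b*(2*M)" "0 \<le> b\<^sup>2*(2*M-g0)"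
    using assms by (auto intro!: mult_mono simp: power2_eq_square mult_left_le_one_le)
  then have "(b\<^sup>2*(2*M-g0))\<^sup>2 \<le> (b*(2*M))\<^sup>2" by (intro power_mono) auto
  then show "(0\<^sup>2*(2*M-g1) - b\<^sup>2*(2*M-g0))\<^sup>2 \<le> 2*(g1-g0)\<^sup>2 + 32*M\<^sup>2*(0-b)\<^sup>2"
  proof -
    have "0 \<le> 2*(g1-g0)\<^sup>2" by simp
    have h1: "(b*(2*M))\<^sup>2 = 4*(M\<^sup>2*b\<^sup>2)" by (simp add: power_mult_distrib)
    have h2: "32*M\<^sup>2*(0-b)\<^sup>2 = 32*(M\<^sup>2*b\<^sup>2)" by simp
    have h3: "0 \<le> M\<^sup>2*b\<^sup>2" by simp
    have h4: "(0\<^sup>2*(2*M-g1) - b\<^sup>2*(2*M-g0))\<^sup>2 = (b\<^sup>2*(2*M-g0))\<^sup>2" by simp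
    show ?thesis using h1 h2 h3 h4 \<open>(b\<^sup>2*(2*M-g0))\<^sup>2 \<le> (b*(2*M))\<^sup>2\<close> \<open>0 \<le> 2*(g1-g0)\<^sup>2\<close> by linarith
  qed
qed



lemma Dbound:
  fixes k :: "'a::euclidean_space \<Rightarrow> 'a \<Rightarrow> real" and \<eta> :: "'a \<Rightarrow> real"
  assumes km: "(\<lambda>(x,y). k x y) \<in> borel_measurable (lborel \<Otimes>\<^sub>M lborel)"
    and kpos: "\<And>x y. x \<noteq> y \<Longrightarrow> 0 \<le> k x y"
    and U1: "cond_U1 cU \<alpha> k"
    and \<eta>m: "\<eta> \<in> borel_measurable lborel"
    and \<eta>01: "\<And>x. 0 \<le> \<eta> x \<and> \<eta> x \<le> 1"
    and lip: "\<And>x y. \<bar>\<eta> y - \<eta> x\<bar> \<le> L * norm (y - x)"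
    and L: "0 < L"
  shows "(\<integral>\<^sup>+y. ennreal ((\<eta> y - \<eta> x)\<^sup>2 * k x y) \<partial>lborel) \<le> ennreal (cU * L powr \<alpha>)"
proof -
  define R where "R = 1 / L"
  have R: "R > 0" using L by (simp add: R_def)
  have pt: "(\<eta> y - \<eta> x)\<^sup>2 * k x y \<le> L\<^sup>2 * (min (R\<^sup>2) ((norm (y - x))\<^sup>2) * k x y)" for y
  proof (cases "x = y")
    case True then show ?thesis by simp
  next
    case False
    then have k0: "0 \<le> k x y" using kpos by auto
    have c: "\<bar>\<eta> y - \<eta> x\<bar> \<le> 1" using \<eta>01[of x] \<eta>01[of y] by auto
    have a: "(\<eta> y - \<eta> x)\<^sup>2 \<le> 1"
      using abs_le_square_iff[of "\<eta> y - \<eta> x" 1] c by simp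
    have b: "(\<eta> y - \<eta> x)\<^sup>2 \<le> (L * norm (y - x))\<^sup>2"
      using lip[of y x] by (simp add: abs_le_square_iff[symmetric])
    have "(\<eta> y - \<eta> x)\<^sup>2 \<le> L\<^sup>2 * min (R\<^sup>2) ((norm (y - x))\<^sup>2)"
    proof -
      have "L\<^sup>2 * R\<^sup>2 = 1" using L by (simp add: R_def power_divide)
      then show ?thesis using a b by (simp add: min_def power_mult_distrib)
    qed
    then show ?thesis using k0
      by (metis mult.assoc mult_right_mono)
  qed
  have "(\<integral>\<^sup>+y. ennreal ((\<eta> y - \<eta> x)\<^sup>2 * k x y) \<partial>lborel)
      \<le> (\<integral>\<^sup>+y. ennreal (L\<^sup>2) * ennreal (min (R\<^sup>2) ((norm (y - x))\<^sup>2) * k x y) \<partial>lborel)"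
    by (intro nn_integral_mono) (simp add: ennreal_mult'[symmetric] pt ennreal_leI)
  also have "\<dots> = ennreal (L\<^sup>2) * (\<integral>\<^sup>+y. ennreal (min (R\<^sup>2) ((norm (y - x))\<^sup>2) * k x y) \<partial>lborel)"
  proof (intro nn_integral_cmult)
    have "(\<lambda>y. (\<lambda>(x,y). k x y) (x, y)) \<in> borel_measurable lborel"
      by (rule measurable_Pair2[OF km]) simp
    then have [measurable]: "k x \<in> borel_measurable lborel" by simp
    show "(\<lambda>y. ennreal (min (R\<^sup>2) ((norm (y - x))\<^sup>2) * k x y)) \<in> borel_measurable lborel"
      by measurable
  qed
  also have "\<dots> \<le> ennreal (L\<^sup>2) * ennreal (cU * R powr (2 - \<alpha>))"
    using U1 R unfolding cond_U1_def by (intro mult_left_mono) auto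
  also have "\<dots> = ennreal (cU * L powr \<alpha>)"
  proof -
    have "L\<^sup>2 * (cU * R powr (2 - \<alpha>)) = cU * L powr \<alpha>"
    proof -
      have e1: "R powr (2-\<alpha>) = 1 / L powr (2-\<alpha>)" using L by (simp add: R_def powr_divide)
      have e2: "L powr (2-\<alpha>) = L\<^sup>2 / L powr \<alpha>" using L by (simp add: powr_diff)
      have p: "L powr \<alpha> > 0" "L\<^sup>2 > 0" using L by auto
      show ?thesis unfolding e1 e2 using p by (simp add: field_simps)
    qed
    then show ?thesis by (metis ennreal_mult' zero_le_power2)
  qed
  finally show ?thesis .
qed



lemma Qbound:
  fixes k :: "'a::euclidean_space \<Rightarrow> 'a \<Rightarrow> real" and \<eta> :: "'a \<Rightarrow> real"
  assumes km[measurable]: "(\<lambda>(x,y). k x y) \<in> borel_measurable (lborel \<Otimes>\<^sub>M lborel)"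
    and kpos: "\<And>x y. x \<noteq> y \<Longrightarrow> 0 \<le> k x y \<and> k x y = k y x"
    and U1: "cond_U1 cU \<alpha> k"
    and \<eta>m[measurable]: "\<eta> \<in> borel_measurable lborel"
    and \<eta>01: "\<And>x. 0 \<le> \<eta> x \<and> \<eta> x \<le> 1"
    and lip: "\<And>x y. \<bar>\<eta> y - \<eta> x\<bar> \<le> L * norm (y - x)"
    and L: "0 < L"
    and Am[measurable]: "A \<in> sets lborel"
    and \<eta>A: "\<And>x. x \<notin> A \<Longrightarrow> \<eta> x = 0"
  shows "(\<integral>\<^sup>+x. \<integral>\<^sup>+y. ennreal ((\<eta> y - \<eta> x)\<^sup>2 * k x y) \<partial>lborel \<partial>lborel)
     \<le> 2 * emeasure lborel A * ennreal (cU * L powr \<alpha>)"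
proof -
  define D where "D x y = ennreal ((\<eta> y - \<eta> x)\<^sup>2 * k x y)" for x y
  define c where "c = ennreal (cU * L powr \<alpha>)"
  have Db: "(\<integral>\<^sup>+y. D x y \<partial>lborel) \<le> c" for x
    unfolding D_def c_def by (rule Dbound[OF km _ U1 \<eta>m \<eta>01 lip L]) (use kpos in auto)
  have Dm[measurable]: "(\<lambda>(x,y). D x y) \<in> borel_measurable (lborel \<Otimes>\<^sub>M lborel)"
    unfolding D_def by measurable
  have Dsym: "D x y = D y x" for x y
    unfolding D_def using kpos[of x y] by (cases "x = y") (auto simp: power2_commute)
  have "(\<integral>\<^sup>+x. \<integral>\<^sup>+y. D x y \<partial>lborel \<partial>lborel)
      \<le> (\<integral>\<^sup>+x. \<integral>\<^sup>+y. indicator A x * D x y + indicator A y * D x y \<partial>lborel \<partial>lborel)"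
    by (intro nn_integral_mono) (auto simp: D_def indicator_def \<eta>A)
  also have "\<dots> = (\<integral>\<^sup>+x. (\<integral>\<^sup>+y. indicator A x * D x y \<partial>lborel) + (\<integral>\<^sup>+y. indicator A y * D x y \<partial>lborel) \<partial>lborel)"
    by (intro nn_integral_cong nn_integral_add) measurable
  also have "\<dots> = (\<integral>\<^sup>+x. \<integral>\<^sup>+y. indicator A x * D x y \<partial>lborel \<partial>lborel) + (\<integral>\<^sup>+x. \<integral>\<^sup>+y. indicator A y * D x y \<partial>lborel \<partial>lborel)"
    by (intro nn_integral_add) measurable
  also have "(\<integral>\<^sup>+x. \<integral>\<^sup>+y. indicator A y * D x y \<partial>lborel \<partial>lborel) = (\<integral>\<^sup>+y. \<integral>\<^sup>+x. indicator A y * D x y \<partial>lborel \<partial>lborel)"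
    by (rule lborel_pair.Fubini'[symmetric]) measurable
  also have "\<dots> = (\<integral>\<^sup>+x. \<integral>\<^sup>+y. indicator A x * D x y \<partial>lborel \<partial>lborel)"
    by (simp add: Dsym)
  also have "(\<integral>\<^sup>+x. \<integral>\<^sup>+y. indicator A x * D x y \<partial>lborel \<partial>lborel) \<le> emeasure lborel A * c"
  proof -
    have "(\<integral>\<^sup>+x. \<integral>\<^sup>+y. indicator A x * D x y \<partial>lborel \<partial>lborel) = (\<integral>\<^sup>+x. indicator A x * (\<integral>\<^sup>+y. D x y \<partial>lborel) \<partial>lborel)"
      by (intro nn_integral_cong nn_integral_cmult) measurable
    also have "\<dots> \<le> (\<integral>\<^sup>+x. c * indicator A x \<partial>lborel)"
      by (intro nn_integral_mono) (auto simp: indicator_def Db)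
    also have "\<dots> = c * emeasure lborel A" by (rule nn_integral_cmult_indicator[OF Am])
    finally show ?thesis by (simp add: mult.commute)
  qed
  finally have "(\<integral>\<^sup>+x. \<integral>\<^sup>+y. D x y \<partial>lborel \<partial>lborel) \<le> emeasure lborel A * c + emeasure lborel A * c"
    by (metis add_mono)
  then show ?thesis unfolding D_def c_def by (simp add: mult_2 distrib_right mult.assoc)
qed



lemma Eq_UNIV: "Eq UNIV k u = (\<integral>\<^sup>+x. \<integral>\<^sup>+y. ennreal ((u y - u x)\<^sup>2 * k x y) \<partial>lborel \<partial>lborel)"
  unfolding Eq_def by simp

lemma enn_split:
  fixes a f B :: real
  assumes "0 \<le> a" "0 \<le> B" "a + f \<le> B"
  shows "ennreal a + ennreal f \<le> ennreal B + ennreal (- f)"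
proof (cases "0 \<le> f")
  case True
  then have "ennreal a + ennreal f = ennreal (a + f)" using assms by (simp add: ennreal_plus)
  also have "\<dots> \<le> ennreal B" using assms by (intro ennreal_leI) simp
  finally show ?thesis by (simp add: add_increasing2)
next
  case False
  then have "ennreal a + ennreal f = ennreal a" by (simp add: ennreal_neg)
  also have "\<dots> \<le> ennreal (B + - f)" using assms by (intro ennreal_leI) simp
  also have "\<dots> = ennreal B + ennreal (- f)" using assms False by (intro ennreal_plus) auto
  finally show ?thesis .
qed

lemma main_bound:
  fixes k :: "'a::euclidean_space \<Rightarrow> 'a \<Rightarrow> real" and G \<eta> :: "'a \<Rightarrow> real"
  assumes km[measurable]: "(\<lambda>(x,y). k x y) \<in> borel_measurable (lborel \<Otimes>\<^sub>M lborel)"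
    and kpos: "\<And>x y. x \<noteq> y \<Longrightarrow> 0 \<le> k x y \<and> k x y = k y x"
    and U1: "cond_U1 cU \<alpha> k"
    and \<eta>m[measurable]: "\<eta> \<in> borel_measurable lborel"
    and \<eta>01: "\<And>x. 0 \<le> \<eta> x \<and> \<eta> x \<le> 1"
    and lip: "\<And>x y. \<bar>\<eta> y - \<eta> x\<bar> \<le> L * norm (y - x)"
    and L: "0 < L"
    and Am[measurable]: "A \<in> sets lborel"
    and \<eta>A: "\<And>x. x \<notin> A \<Longrightarrow> \<eta> x = 0"
    and Afin: "emeasure lborel A < \<infinity>"
    and green: "is_reg_green k \<Omega> y0 \<rho> G"
    and A\<Omega>: "A \<subseteq> \<Omega>" and Aball: "A \<inter> ball y0 \<rho> = {}"
    and GM: "\<And>x. x \<in> A \<Longrightarrow> G x \<le> M" and M: "0 < M"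
  shows "(\<integral>\<^sup>+x. indicator (- A) x * (\<integral>\<^sup>+y. indicator A y * ennreal (G x * (\<eta> y)\<^sup>2 * k x y) \<partial>lborel) \<partial>lborel)
      \<le> ennreal (8 * M) * emeasure lborel A * ennreal (cU * L powr \<alpha>)"
proof -
  have HG: "H_Omega \<Omega> k G" and eqn: "\<And>\<phi>. H_Omega \<Omega> k \<phi> \<Longrightarrow>
        Ebil k G \<phi> = (\<integral> x. indicator (ball y0 \<rho>) x * \<phi> x \<partial>lborel) / measure lborel (ball y0 \<rho>)"
    and G0: "\<And>x. 0 \<le> G x"
    using green unfolding is_reg_green_def by auto
  have Gm[measurable]: "G \<in> borel_measurable lborel" and EqG: "Eq UNIV k G < \<infinity>"
    using HG unfolding H_Omega_def H_space_def L2on_def by auto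
  define c where "c = ennreal (cU * L powr \<alpha>)"
  define \<phi> where "\<phi> x = (\<eta> x)\<^sup>2 * (2*M - G x)" for x
  have \<phi>m[measurable]: "\<phi> \<in> borel_measurable lborel" unfolding \<phi>_def by measurable
  define Q where "Q = (\<integral>\<^sup>+x. \<integral>\<^sup>+y. ennreal ((\<eta> y - \<eta> x)\<^sup>2 * k x y) \<partial>lborel \<partial>lborel)"
  have Qb: "Q \<le> 2 * emeasure lborel A * c"
    unfolding Q_def c_def by (rule Qbound[OF km kpos U1 \<eta>m \<eta>01 lip L Am \<eta>A])
  have Qfin: "Q < \<infinity>"
    using Qb Afin unfolding c_def
    by (metis ennreal_mult_less_top ennreal_numeral_less_top infinity_ennreal_def le_less_trans ennreal_less_top)
  have sqk: "0 \<le> (u y - u x)\<^sup>2 * k x y" for u :: "'a \<Rightarrow> real" and x y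
    using kpos[of x y] by (cases "x = y") auto
  have C1: "(\<phi> y - \<phi> x)\<^sup>2 * k x y \<le> (2*(G y - G x)\<^sup>2 + 32*M\<^sup>2*(\<eta> y - \<eta> x)\<^sup>2) * k x y" for x y
  proof (cases "x = y")
    case True then show ?thesis by simp
  next
    case False
    then have k0: "0 \<le> k x y" using kpos by auto
    have "(\<phi> y - \<phi> x)\<^sup>2 \<le> 2*(G y - G x)\<^sup>2 + 32*M\<^sup>2*(\<eta> y - \<eta> x)\<^sup>2"
    proof (cases "x \<in> A"; cases "y \<in> A")
      assume "x \<in> A" "y \<in> A"
      then show ?thesis unfolding \<phi>_def
        using pt_both2[of "G x" M "G y" "\<eta> y" "\<eta> x"] G0 GM \<eta>01 by auto
    next
      assume "x \<notin> A" "y \<in> A"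
      then show ?thesis unfolding \<phi>_def
        using pt_cross1(2)[of "G x" "G y" M "\<eta> y"] G0 GM \<eta>01 \<eta>A M by auto
    next
      assume "x \<in> A" "y \<notin> A"
      then show ?thesis unfolding \<phi>_def
        using pt_cross2(2)[of "G x" M "G y" "\<eta> x"] G0 GM \<eta>01 \<eta>A M by auto
    next
      assume "x \<notin> A" "y \<notin> A"
      then show ?thesis unfolding \<phi>_def using \<eta>A by simp
    qed
    then show ?thesis using k0 by (rule mult_right_mono)
  qed
  define h where "h x y = indicator (- A) x * indicator A y * (G x * (\<eta> y)\<^sup>2 * k x y)" for x y
  define f where "f x y = (G y - G x) * (\<phi> y - \<phi> x) * k x y" for x y
  have hm[measurable]: "(\<lambda>(x,y). h x y) \<in> borel_measurable (lborel \<Otimes>\<^sub>M lborel)"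
    unfolding h_def by measurable
  have fm[measurable]: "(\<lambda>(x,y). f x y) \<in> borel_measurable (lborel \<Otimes>\<^sub>M lborel)"
    unfolding f_def by measurable
  have h0: "0 \<le> h x y" for x y
    unfolding h_def using kpos[of x y] G0[of x] by (cases "x = y") (auto simp: indicator_def)
  have C2: "M * h x y + f x y \<le> 4*M\<^sup>2*((\<eta> y - \<eta> x)\<^sup>2 * k x y)" for x y
  proof (cases "x = y")
    case True then show ?thesis by (simp add: h_def f_def indicator_def)
  next
    case False
    then have k0: "0 \<le> k x y" using kpos by auto
    have "M * (indicator (- A) x * indicator A y * (G x * (\<eta> y)\<^sup>2)) + (G y - G x) * (\<phi> y - \<phi> x)
        \<le> 4*M\<^sup>2*(\<eta> y - \<eta> x)\<^sup>2"
    proof (cases "x \<in> A"; cases "y \<in> A")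
      assume "x \<in> A" "y \<in> A"
      then show ?thesis unfolding \<phi>_def
        using pt_both1[of "G x" M "G y" "\<eta> y" "\<eta> x"] G0 GM \<eta>01 by auto
    next
      assume "x \<notin> A" "y \<in> A"
      then show ?thesis unfolding \<phi>_def
        using pt_cross1(1)[of "G x" "G y" M "\<eta> y"] G0 GM \<eta>01 \<eta>A M by auto
    next
      assume "x \<in> A" "y \<notin> A"
      then show ?thesis unfolding \<phi>_def
        using pt_cross2(1)[of "G x" M "G y" "\<eta> x"] G0 GM \<eta>01 \<eta>A M by auto
    next
      assume "x \<notin> A" "y \<notin> A"
      then show ?thesis unfolding \<phi>_def using \<eta>A by simp
    qed
    then have "(M * (indicator (- A) x * indicator A y * (G x * (\<eta> y)\<^sup>2)) + (G y - G x) * (\<phi> y - \<phi> x)) * k x y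
        \<le> (4*M\<^sup>2*(\<eta> y - \<eta> x)\<^sup>2) * k x y" using k0 by (rule mult_right_mono)
    then show ?thesis by (simp add: h_def f_def algebra_simps)
  qed

  have Eq\<phi>: "Eq UNIV k \<phi> < \<infinity>"
  proof -
    have "Eq UNIV k \<phi> \<le> (\<integral>\<^sup>+x. \<integral>\<^sup>+y. ennreal 2 * ennreal ((G y - G x)\<^sup>2 * k x y)
          + ennreal (32*M\<^sup>2) * ennreal ((\<eta> y - \<eta> x)\<^sup>2 * k x y) \<partial>lborel \<partial>lborel)"
      unfolding Eq_UNIV
    proof (intro nn_integral_mono)
      fix x y
      have "ennreal ((\<phi> y - \<phi> x)\<^sup>2 * k x y) \<le> ennreal ((2*(G y - G x)\<^sup>2 + 32*M\<^sup>2*(\<eta> y - \<eta> x)\<^sup>2) * k x y)"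
        using C1 by (rule ennreal_leI)
      also have "\<dots> = ennreal (2 * ((G y - G x)\<^sup>2 * k x y) + 32*M\<^sup>2 * ((\<eta> y - \<eta> x)\<^sup>2 * k x y))"
        by (simp add: algebra_simps)
      also have "\<dots> = ennreal 2 * ennreal ((G y - G x)\<^sup>2 * k x y)
          + ennreal (32*M\<^sup>2) * ennreal ((\<eta> y - \<eta> x)\<^sup>2 * k x y)"
        using sqk[where u=G and x=x and y=y] sqk[where u=\<eta> and x=x and y=y] by (simp add: ennreal_plus ennreal_mult)
      finally show "ennreal ((\<phi> y - \<phi> x)\<^sup>2 * k x y) \<le> ennreal 2 * ennreal ((G y - G x)\<^sup>2 * k x y)
          + ennreal (32*M\<^sup>2) * ennreal ((\<eta> y - \<eta> x)\<^sup>2 * k x y)" .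
    qed
    also have "\<dots> = ennreal 2 * Eq UNIV k G + ennreal (32*M\<^sup>2) * Q"
      unfolding Eq_UNIV Q_def
      by (simp add: nn_integral_add nn_integral_cmult)
    also have "\<dots> < \<infinity>" using EqG Qfin
      by (simp add: ennreal_mult_eq_top_iff less_top[symmetric] del: ennreal_numeral)
    finally show ?thesis .
  qed
  have L2\<phi>: "L2on UNIV \<phi>"
    unfolding L2on_def
  proof (intro conjI \<phi>m)
    have "(\<integral>\<^sup>+ x. indicator UNIV x * ennreal ((\<phi> x)\<^sup>2) \<partial>lborel) \<le> (\<integral>\<^sup>+ x. ennreal (4*M\<^sup>2) * indicator A x \<partial>lborel)"
    proof (intro nn_integral_mono)
      fix x
      show "indicator UNIV x * ennreal ((\<phi> x)\<^sup>2) \<le> ennreal (4*M\<^sup>2) * indicator A x"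
      proof (cases "x \<in> A")
        case True
        have a: "0 \<le> \<phi> x" "\<phi> x \<le> 2*M"
        proof -
          have "(\<eta> x)\<^sup>2 \<le> 1" using \<eta>01[of x] by (simp add: power_le_one)
          moreover have "0 \<le> 2*M - G x" "2*M - G x \<le> 2*M" using GM[OF True] G0[of x] M by auto
          ultimately have "(\<eta> x)\<^sup>2 * (2*M - G x) \<le> 1 * (2*M)"
            by (intro mult_mono) auto
          then show "\<phi> x \<le> 2*M" unfolding \<phi>_def by simp
          show "0 \<le> \<phi> x" unfolding \<phi>_def using \<open>0 \<le> 2*M - G x\<close> by simp
        qed
        then have "(\<phi> x)\<^sup>2 \<le> (2*M)\<^sup>2" by (intro power_mono) auto
        then show ?thesis using True by (simp add: ennreal_leI power_mult_distrib)
      next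
        case False then show ?thesis by (simp add: \<phi>_def \<eta>A)
      qed
    qed
    also have "\<dots> = ennreal (4*M\<^sup>2) * emeasure lborel A" by (rule nn_integral_cmult_indicator[OF Am])
    also have "\<dots> < \<infinity>" using Afin by (simp add: ennreal_mult_eq_top_iff less_top[symmetric])
    finally show "(\<integral>\<^sup>+ x. indicator UNIV x * ennreal ((\<phi> x)\<^sup>2) \<partial>lborel) < \<infinity>" .
  qed
  have H\<phi>: "H_Omega \<Omega> k \<phi>"
    unfolding H_Omega_def H_space_def using L2\<phi> Eq\<phi> A\<Omega>
    by (auto simp: \<phi>_def intro!: AE_I2 \<eta>A)
  have Ezero: "Ebil k G \<phi> = 0"
  proof -
    have "(\<lambda>x. indicator (ball y0 \<rho>) x * \<phi> x) = (\<lambda>x. 0)"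
      using Aball by (auto simp: indicator_def \<phi>_def fun_eq_iff intro!: \<eta>A)
    then show ?thesis using eqn[OF H\<phi>] by simp
  qed
  have ffin: "(\<integral>\<^sup>+x. \<integral>\<^sup>+y. ennreal \<bar>f x y\<bar> \<partial>lborel \<partial>lborel) < \<infinity>"
  proof -
    have "(\<integral>\<^sup>+x. \<integral>\<^sup>+y. ennreal \<bar>f x y\<bar> \<partial>lborel \<partial>lborel)
        \<le> (\<integral>\<^sup>+x. \<integral>\<^sup>+y. ennreal ((G y - G x)\<^sup>2 * k x y) + ennreal ((\<phi> y - \<phi> x)\<^sup>2 * k x y) \<partial>lborel \<partial>lborel)"
    proof (intro nn_integral_mono)
      fix x y
      have "\<bar>f x y\<bar> \<le> (G y - G x)\<^sup>2 * k x y + (\<phi> y - \<phi> x)\<^sup>2 * k x y"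
      proof (cases "x = y")
        case True then show ?thesis by (simp add: f_def)
      next
        case False
        then have k0: "0 \<le> k x y" using kpos by auto
        have "\<bar>(G y - G x) * (\<phi> y - \<phi> x)\<bar> \<le> (G y - G x)\<^sup>2 + (\<phi> y - \<phi> x)\<^sup>2"
        proof -
          have "0 \<le> (\<bar>G y - G x\<bar> - \<bar>\<phi> y - \<phi> x\<bar>)\<^sup>2" by simp
          then have "2 * (\<bar>G y - G x\<bar> * \<bar>\<phi> y - \<phi> x\<bar>) \<le> (G y - G x)\<^sup>2 + (\<phi> y - \<phi> x)\<^sup>2"
            by (simp add: power2_eq_square algebra_simps)
          moreover have "0 \<le> \<bar>G y - G x\<bar> * \<bar>\<phi> y - \<phi> x\<bar>" by simp
          ultimately have "\<bar>G y - G x\<bar> * \<bar>\<phi> y - \<phi> x\<bar> \<le> (G y - G x)\<^sup>2 + (\<phi> y - \<phi> x)\<^sup>2" by linarith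
          then show ?thesis by (simp add: abs_mult)
        qed
        then have "\<bar>(G y - G x) * (\<phi> y - \<phi> x)\<bar> * k x y \<le> ((G y - G x)\<^sup>2 + (\<phi> y - \<phi> x)\<^sup>2) * k x y"
          using k0 by (rule mult_right_mono)
        moreover have "\<bar>f x y\<bar> = \<bar>(G y - G x) * (\<phi> y - \<phi> x)\<bar> * k x y"
          using k0 by (simp add: f_def abs_mult)
        moreover have "((G y - G x)\<^sup>2 + (\<phi> y - \<phi> x)\<^sup>2) * k x y = (G y - G x)\<^sup>2 * k x y + (\<phi> y - \<phi> x)\<^sup>2 * k x y"
          by (rule distrib_right)
        ultimately show ?thesis by linarith
      qed
      then show "ennreal \<bar>f x y\<bar> \<le> ennreal ((G y - G x)\<^sup>2 * k x y) + ennreal ((\<phi> y - \<phi> x)\<^sup>2 * k x y)"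
      proof -
        have "ennreal \<bar>f x y\<bar> \<le> ennreal ((G y - G x)\<^sup>2 * k x y + (\<phi> y - \<phi> x)\<^sup>2 * k x y)"
          by (rule ennreal_leI) fact
        also have "\<dots> = ennreal ((G y - G x)\<^sup>2 * k x y) + ennreal ((\<phi> y - \<phi> x)\<^sup>2 * k x y)"
          by (rule ennreal_plus) (rule sqk)+
        finally show ?thesis .
      qed
    qed
    also have "\<dots> = Eq UNIV k G + Eq UNIV k \<phi>"
      unfolding Eq_UNIV
    proof -
      have "(\<integral>\<^sup>+x. \<integral>\<^sup>+y. ennreal ((G y - G x)\<^sup>2 * k x y) + ennreal ((\<phi> y - \<phi> x)\<^sup>2 * k x y) \<partial>lborel \<partial>lborel)
        = (\<integral>\<^sup>+x. (\<integral>\<^sup>+y. ennreal ((G y - G x)\<^sup>2 * k x y) \<partial>lborel) + (\<integral>\<^sup>+y. ennreal ((\<phi> y - \<phi> x)\<^sup>2 * k x y) \<partial>lborel) \<partial>lborel)"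
        by (intro nn_integral_cong nn_integral_add) measurable
      also have "\<dots> = (\<integral>\<^sup>+x. \<integral>\<^sup>+y. ennreal ((G y - G x)\<^sup>2 * k x y) \<partial>lborel \<partial>lborel) + (\<integral>\<^sup>+x. \<integral>\<^sup>+y. ennreal ((\<phi> y - \<phi> x)\<^sup>2 * k x y) \<partial>lborel \<partial>lborel)"
        by (intro nn_integral_add) measurable
      finally show "(\<integral>\<^sup>+x. \<integral>\<^sup>+y. ennreal ((G y - G x)\<^sup>2 * k x y) + ennreal ((\<phi> y - \<phi> x)\<^sup>2 * k x y) \<partial>lborel \<partial>lborel)
        = (\<integral>\<^sup>+x. \<integral>\<^sup>+y. ennreal ((G y - G x)\<^sup>2 * k x y) \<partial>lborel \<partial>lborel) + (\<integral>\<^sup>+x. \<integral>\<^sup>+y. ennreal ((\<phi> y - \<phi> x)\<^sup>2 * k x y) \<partial>lborel \<partial>lborel)" .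
    qed
    also have "\<dots> < \<infinity>" using EqG Eq\<phi> by (simp add: less_top[symmetric])
    finally show ?thesis .
  qed
  have PN: "(\<integral>\<^sup>+x. \<integral>\<^sup>+y. ennreal (f x y) \<partial>lborel \<partial>lborel) = (\<integral>\<^sup>+x. \<integral>\<^sup>+y. ennreal (- f x y) \<partial>lborel \<partial>lborel)"
    by (rule iter_zero[OF fm ffin]) (use Ezero in \<open>simp add: Ebil_def f_def\<close>)
  have Pfin: "(\<integral>\<^sup>+x. \<integral>\<^sup>+y. ennreal (f x y) \<partial>lborel \<partial>lborel) < \<infinity>"
    using ffin by (rule le_less_trans[rotated]) (intro nn_integral_mono, simp)
  define H where "H = (\<integral>\<^sup>+x. \<integral>\<^sup>+y. ennreal (h x y) \<partial>lborel \<partial>lborel)"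
  define P where "P = (\<integral>\<^sup>+x. \<integral>\<^sup>+y. ennreal (f x y) \<partial>lborel \<partial>lborel)"
  have MH: "(\<integral>\<^sup>+x. \<integral>\<^sup>+y. ennreal (M * h x y) \<partial>lborel \<partial>lborel) = ennreal M * H"
  proof -
    have "(\<integral>\<^sup>+x. \<integral>\<^sup>+y. ennreal (M * h x y) \<partial>lborel \<partial>lborel)
        = (\<integral>\<^sup>+x. ennreal M * (\<integral>\<^sup>+y. ennreal (h x y) \<partial>lborel) \<partial>lborel)"
      using M by (subst nn_integral_cmult[symmetric]) (auto simp: ennreal_mult')
    also have "\<dots> = ennreal M * H" unfolding H_def by (rule nn_integral_cmult) measurable
    finally show ?thesis .
  qed
  have "ennreal M * H + P = (\<integral>\<^sup>+x. \<integral>\<^sup>+y. ennreal (M * h x y) + ennreal (f x y) \<partial>lborel \<partial>lborel)"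
    unfolding P_def MH[symmetric]
    by (simp add: nn_integral_add)
  also have "\<dots> \<le> (\<integral>\<^sup>+x. \<integral>\<^sup>+y. ennreal (4*M\<^sup>2*((\<eta> y - \<eta> x)\<^sup>2 * k x y)) + ennreal (- f x y) \<partial>lborel \<partial>lborel)"
    by (intro nn_integral_mono enn_split) (use M h0 C2 sqk in auto)
  also have "\<dots> = ennreal (4*M\<^sup>2) * Q + P"
    unfolding Q_def P_def PN using sqk
    by (simp add: nn_integral_add nn_integral_cmult ennreal_mult)
  finally have "ennreal M * H + P \<le> ennreal (4*M\<^sup>2) * Q + P" .
  then have "ennreal M * H \<le> ennreal (4*M\<^sup>2) * Q"
    using Pfin unfolding P_def[symmetric] by (auto simp: ennreal_add_left_cancel_le add.commute)
  also have "\<dots> \<le> ennreal (4*M\<^sup>2) * (2 * emeasure lborel A * c)"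
    using Qb by (intro mult_left_mono) auto
  also have "\<dots> = ennreal M * (ennreal (8 * M) * emeasure lborel A * c)"
  proof -
    have e1: "ennreal (4*M\<^sup>2) * ennreal 2 = ennreal (4*M\<^sup>2*2)" by (rule ennreal_mult'[symmetric]) simp
    have e2: "ennreal M * ennreal (8*M) = ennreal (M*(8*M))" using M by (intro ennreal_mult'[symmetric]) simp
    have e3: "4*M\<^sup>2*2 = M*(8*M)" by (simp add: power2_eq_square)
    have X: "ennreal (4*M\<^sup>2) * 2 = ennreal M * ennreal (8*M)"
    proof -
      have "ennreal (4*M\<^sup>2) * 2 = ennreal (4*M\<^sup>2*2)" using e1 by (simp only: ennreal_numeral)
      also have "\<dots> = ennreal (M*(8*M))" by (simp only: e3)
      also have "\<dots> = ennreal M * ennreal (8*M)" by (rule e2[symmetric])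
      finally show ?thesis .
    qed
    have "ennreal (4*M\<^sup>2) * (2 * emeasure lborel A * c) = (ennreal (4*M\<^sup>2) * 2) * emeasure lborel A * c"
      by (simp only: mult.assoc)
    also have "\<dots> = (ennreal M * ennreal (8*M)) * emeasure lborel A * c" by (simp only: X)
    also have "\<dots> = ennreal M * (ennreal (8 * M) * emeasure lborel A * c)" by (simp only: mult.assoc)
    finally show ?thesis .
  qed
  finally have HB: "H \<le> ennreal (8 * M) * emeasure lborel A * c"
  proof -
    have nz: "ennreal M \<noteq> 0" using M by simp
    have nt: "ennreal M \<noteq> top" by simp
    show "ennreal M * H \<le> ennreal M * (ennreal (8 * M) * emeasure lborel A * c) \<Longrightarrow> H \<le> ennreal (8 * M) * emeasure lborel A * c"
      using ennreal_mult_le_mult_iff[OF nz nt] by blast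
  qed
  have "(\<integral>\<^sup>+x. indicator (- A) x * (\<integral>\<^sup>+y. indicator A y * ennreal (G x * (\<eta> y)\<^sup>2 * k x y) \<partial>lborel) \<partial>lborel) = H"
    unfolding H_def
  proof (intro nn_integral_cong)
    fix x
    have "indicator (- A) x * (\<integral>\<^sup>+y. indicator A y * ennreal (G x * (\<eta> y)\<^sup>2 * k x y) \<partial>lborel)
        = (\<integral>\<^sup>+y. indicator (- A) x * (indicator A y * ennreal (G x * (\<eta> y)\<^sup>2 * k x y)) \<partial>lborel)"
      by (rule nn_integral_cmult[symmetric]) measurable
    also have "\<dots> = (\<integral>\<^sup>+y. ennreal (h x y) \<partial>lborel)"
      by (intro nn_integral_cong) (auto simp: h_def indicator_def)
    finally show "indicator (- A) x * (\<integral>\<^sup>+y. indicator A y * ennreal (G x * (\<eta> y)\<^sup>2 * k x y) \<partial>lborel)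
        = (\<integral>\<^sup>+y. ennreal (h x y) \<partial>lborel)" .
  qed
  then show ?thesis using HB unfolding c_def by (simp only:)
qed



lemma ball_infdist_subset:
  fixes y0 :: "'a::euclidean_space"
  assumes "y0 \<in> \<Omega>"
  shows "ball y0 (infdist y0 (frontier \<Omega>)) \<subseteq> \<Omega>"
proof
  fix z assume z: "z \<in> ball y0 (infdist y0 (frontier \<Omega>))"
  show "z \<in> \<Omega>"
  proof (rule ccontr)
    assume "z \<notin> \<Omega>"
    have "closed_segment y0 z \<inter> frontier \<Omega> \<noteq> {}"
      by (rule connected_Int_frontier) (use assms \<open>z \<notin> \<Omega>\<close> in auto)
    then obtain w where w: "w \<in> closed_segment y0 z" "w \<in> frontier \<Omega>" by auto
    have "dist w y0 \<le> dist y0 z" using dist_in_closed_segment[OF w(1)] by auto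
    moreover have "infdist y0 (frontier \<Omega>) \<le> dist y0 w" by (rule infdist_le[OF w(2)])
    ultimately show False using z by (simp add: dist_commute)
  qed
qed

theorem final:
  fixes \<epsilon> cU :: real
  assumes "0 < cU" and "0 < \<epsilon>" and "\<epsilon> < 1/2"
  shows "\<exists>C. \<forall>\<alpha> (k :: 'a::euclidean_space \<Rightarrow> 'a \<Rightarrow> real) \<Omega> G y0 r \<rho> \<eta>.
       \<alpha> < 2 \<and> kernel_std k \<and> cond_U1 cU \<alpha> k \<and>
       y0 \<in> \<Omega> \<and> r < infdist y0 (frontier \<Omega>) / 2 \<and>
       0 < \<rho> \<and> \<rho> < \<epsilon> * r / 2 \<and> is_reg_green k \<Omega> y0 \<rho> G \<and>
       smooth_fun \<eta> \<and> (\<forall>x. 0 \<le> \<eta> x \<and> \<eta> x \<le> 1) \<and>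
       (\<forall>x\<in>annulus y0 r (\<epsilon> * r). \<eta> x = 1) \<and>
       (\<forall>x. x \<notin> annulus y0 (3 * r / 2) (\<epsilon> * r / 2) \<longrightarrow> \<eta> x = 0) \<and>
       (\<forall>x. onorm (frechet_derivative \<eta> (at x)) \<le> 4 / \<epsilon> * r powr (-1))
     \<longrightarrow>
       (\<integral>\<^sup>+ x. indicator (- annulus y0 (3 * r / 2) (\<epsilon> * r / 2)) x *
          (\<integral>\<^sup>+ y. indicator (annulus y0 (3 * r / 2) (\<epsilon> * r / 2)) y *
              ennreal (G x * (\<eta> y)\<^sup>2 * k x y) \<partial>lborel) \<partial>lborel)
         \<le> ennreal (C * r powr (real DIM('a) - \<alpha>)) *
            (SUP x\<in>annulus y0 (3 * r / 2) (\<epsilon> * r / 2). ennreal (G x))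
     \<and>
       (\<integral>\<^sup>+ x. indicator (- annulus y0 (3 * r / 2) (\<epsilon> * r / 2)) x *
          (\<integral>\<^sup>+ y. indicator (annulus y0 r (\<epsilon> * r)) y *
              ennreal (G x * k x y) \<partial>lborel) \<partial>lborel)
         \<le> ennreal (C * r powr (real DIM('a) - \<alpha>)) *
            (SUP x\<in>annulus y0 (3 * r / 2) (\<epsilon> * r / 2). ennreal (G x))"
proof -
  define V where "V = unit_ball_vol (real DIM('a)) * (3/2) ^ DIM('a)"
  have V: "0 < V" unfolding V_def by simp
  define C where "C = 8 * cU * V * (4/\<epsilon>)\<^sup>2"
  have C: "0 < C" unfolding C_def using V assms by simp
  show ?thesis
  proof (rule exI[of _ C], intro allI impI)
    fix \<alpha> and k :: "'a \<Rightarrow> 'a \<Rightarrow> real" and \<Omega> G y0 r \<rho> \<eta>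
    assume H: "\<alpha> < 2 \<and> kernel_std k \<and> cond_U1 cU \<alpha> k \<and>
       y0 \<in> \<Omega> \<and> r < infdist y0 (frontier \<Omega>) / 2 \<and>
       0 < \<rho> \<and> \<rho> < \<epsilon> * r / 2 \<and> is_reg_green k \<Omega> y0 \<rho> G \<and>
       smooth_fun \<eta> \<and> (\<forall>x. 0 \<le> \<eta> x \<and> \<eta> x \<le> 1) \<and>
       (\<forall>x\<in>annulus y0 r (\<epsilon> * r). \<eta> x = 1) \<and>
       (\<forall>x. x \<notin> annulus y0 (3 * r / 2) (\<epsilon> * r / 2) \<longrightarrow> \<eta> x = 0) \<and>
       (\<forall>x. onorm (frechet_derivative \<eta> (at x)) \<le> 4 / \<epsilon> * r powr (-1))"
    define A where "A = annulus y0 (3 * r / 2) (\<epsilon> * r / 2)"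
    have "0 < \<epsilon> * r" using H by linarith
    then have r: "0 < r" using assms by (simp add: zero_less_mult_iff)
    have ks: "kernel_std k" and U1: "cond_U1 cU \<alpha> k" and y0: "y0 \<in> \<Omega>"
      and rd: "r < infdist y0 (frontier \<Omega>) / 2" and \<rho>: "0 < \<rho>" "\<rho> < \<epsilon> * r / 2"
      and green: "is_reg_green k \<Omega> y0 \<rho> G" and sm: "smooth_fun \<eta>"
      and \<eta>01: "\<And>x. 0 \<le> \<eta> x \<and> \<eta> x \<le> 1"
      and \<eta>1: "\<And>x. x \<in> annulus y0 r (\<epsilon> * r) \<Longrightarrow> \<eta> x = 1"
      and \<eta>A: "\<And>x. x \<notin> A \<Longrightarrow> \<eta> x = 0"
      and on: "\<And>x. onorm (frechet_derivative \<eta> (at x)) \<le> 4 / \<epsilon> * r powr (-1)"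
      and \<alpha>2: "\<alpha> < 2"
      using H unfolding A_def by auto
    define L where "L = 4 / (\<epsilon> * r)"
    have L: "0 < L" unfolding L_def using r assms by simp
    have Leq: "4 / \<epsilon> * r powr (-1) = L" unfolding L_def using r by (simp add: powr_minus divide_simps)
    have km: "(\<lambda>(x,y). k x y) \<in> borel_measurable (lborel \<Otimes>\<^sub>M lborel)"
      and kpos: "\<And>x y. x \<noteq> y \<Longrightarrow> 0 \<le> k x y \<and> k x y = k y x"
      using ks unfolding kernel_std_def by auto
    have diff: "\<eta> differentiable (at x)" for x
      using sm unfolding smooth_fun_def by (metis partials.simps(1) singletonI)
    have \<eta>c: "continuous_on UNIV \<eta>"
      using diff by (simp add: differentiable_imp_continuous_on differentiable_on_def)
    have \<eta>m: "\<eta> \<in> borel_measurable lborel"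
      using \<eta>c by (simp add: borel_measurable_continuous_onI)
    have lip: "\<bar>\<eta> y - \<eta> x\<bar> \<le> L * norm (y - x)" for x y
    proof -
      have "norm (\<eta> y - \<eta> x) \<le> L * norm (y - x)"
      proof (rule differentiable_bound[where S=UNIV and f'="\<lambda>x. frechet_derivative \<eta> (at x)"])
        fix z :: 'a
        show "(\<eta> has_derivative frechet_derivative \<eta> (at z)) (at z within UNIV)"
          using diff[of z] frechet_derivative_works by auto
        show "onorm (frechet_derivative \<eta> (at z)) \<le> L" using on[of z] Leq by simp
      qed auto
      then show ?thesis by simp
    qed
    have Am: "A \<in> sets lborel" unfolding A_def annulus_def by (intro sets.Diff) auto
    have Aball3: "A \<subseteq> ball y0 (3 * r / 2)" unfolding A_def annulus_def by auto
    have emA: "emeasure lborel A \<le> ennreal (V * r ^ DIM('a))"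
    proof -
      have "emeasure lborel A \<le> emeasure lborel (ball y0 (3 * r / 2))"
        using Aball3 by (intro emeasure_mono) auto
      also have "\<dots> = ennreal (unit_ball_vol (real DIM('a)) * (3 * r / 2) ^ DIM('a))"
        using r by (intro emeasure_ball) simp
      also have "unit_ball_vol (real DIM('a)) * (3 * r / 2) ^ DIM('a) = V * r ^ DIM('a)"
        unfolding V_def by (simp add: power_mult_distrib power_divide field_simps)
      finally show ?thesis .
    qed
    have Afin: "emeasure lborel A < \<infinity>" using emA by (simp add: le_less_trans)
    have infpos: "3 * r / 2 < infdist y0 (frontier \<Omega>)" using rd r by simp
    have cb\<Omega>: "cball y0 (3 * r / 2) \<subseteq> \<Omega>"
    proof -
      have "cball y0 (3 * r / 2) \<subseteq> ball y0 (infdist y0 (frontier \<Omega>))" using infpos by auto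
      then show ?thesis using ball_infdist_subset[OF y0] by (rule order.trans)
    qed
    have A\<Omega>: "A \<subseteq> \<Omega>" using Aball3 cb\<Omega> ball_subset_cball by blast
    have Aball: "A \<inter> ball y0 \<rho> = {}" using \<rho> unfolding A_def annulus_def by auto
    define K where "K = cball y0 (3 * r / 2) - ball y0 (\<epsilon> * r / 2)"
    have Kc: "compact K" unfolding K_def by (intro compact_diff) auto
    have AK: "A \<subseteq> K" unfolding A_def K_def annulus_def by auto
    have K\<Omega>: "K \<subseteq> \<Omega> - cball y0 \<rho>" using cb\<Omega> \<rho> unfolding K_def by auto
    have Gc: "continuous_on (\<Omega> - cball y0 \<rho>) G" and G0: "\<And>x. 0 \<le> G x"
      using green unfolding is_reg_green_def by auto
    have "compact (G ` K)" using Kc continuous_on_subset[OF Gc K\<Omega>] by (intro compact_continuous_image)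
    then obtain B0 where B0: "\<And>x. x \<in> K \<Longrightarrow> norm (G x) \<le> B0"
      using compact_imp_bounded bounded_iff by (metis imageI)
    define S where "S = (SUP x\<in>A. ennreal (G x))"
    have SB: "S \<le> ennreal B0" unfolding S_def
    proof (intro SUP_least ennreal_leI)
      fix x assume "x \<in> A"
      then have "\<bar>G x\<bar> \<le> B0" using B0 AK by auto
      then show "G x \<le> B0" by simp
    qed
    define s where "s = enn2real S"
    have s0: "0 \<le> s" unfolding s_def by simp
    have Ss: "S = ennreal s" unfolding s_def using SB by (simp add: ennreal_enn2real_if top_unique) (metis ennreal_neq_top top_unique)
    have Gs: "G x \<le> s" if "x \<in> A" for x
    proof -
      have "ennreal (G x) \<le> S" unfolding S_def using that by (rule SUP_upper)
      then show ?thesis using Ss s0 by simp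
    qed
    define KK where "KK = C * r powr (real DIM('a) - \<alpha>)"
    have KK: "0 < KK" unfolding KK_def using C r by simp
    have Lpow: "L powr \<alpha> \<le> (4/\<epsilon>)\<^sup>2 * r powr (- \<alpha>)"
    proof -
      have "L powr \<alpha> = (4/\<epsilon>) powr \<alpha> * r powr (- \<alpha>)"
        unfolding L_def using r assms by (simp add: powr_divide powr_minus powr_mult divide_simps)
      also have "(4/\<epsilon>) powr \<alpha> \<le> (4/\<epsilon>) powr 2"
        using assms \<alpha>2 by (intro powr_mono) (auto simp: field_simps)
      then have "(4/\<epsilon>) powr \<alpha> * r powr (- \<alpha>) \<le> (4/\<epsilon>)\<^sup>2 * r powr (- \<alpha>)"
        using assms by (intro mult_right_mono) (auto simp: powr_numeral)
      finally show ?thesis .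
    qed
    have main1: "(\<integral>\<^sup>+ x. indicator (- A) x *
          (\<integral>\<^sup>+ y. indicator A y * ennreal (G x * (\<eta> y)\<^sup>2 * k x y) \<partial>lborel) \<partial>lborel)
         \<le> ennreal (KK * s) + ennreal e" if e: "0 < e" for e
    proof -
      define M where "M = s + e / KK"
      have eK: "0 < e / KK" using e KK by simp
      have M: "0 < M" unfolding M_def using s0 eK by linarith
      have GM: "\<And>x. x \<in> A \<Longrightarrow> G x \<le> M" using Gs eK unfolding M_def
        by (smt (verit))
      have "(\<integral>\<^sup>+ x. indicator (- A) x *
          (\<integral>\<^sup>+ y. indicator A y * ennreal (G x * (\<eta> y)\<^sup>2 * k x y) \<partial>lborel) \<partial>lborel)
         \<le> ennreal (8 * M) * emeasure lborel A * ennreal (cU * L powr \<alpha>)"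
        by (rule main_bound[OF km kpos U1 \<eta>m \<eta>01 lip L Am \<eta>A Afin green A\<Omega> Aball GM M])
      also have "\<dots> \<le> ennreal (8 * M) * ennreal (V * r ^ DIM('a)) * ennreal (cU * ((4/\<epsilon>)\<^sup>2 * r powr (- \<alpha>)))"
        using emA Lpow assms M by (intro mult_mono ennreal_leI) auto
      also have "\<dots> = ennreal (8 * M * (V * r ^ DIM('a)) * (cU * ((4/\<epsilon>)\<^sup>2 * r powr (- \<alpha>))))"
        using M V r assms by (simp add: ennreal_mult'[symmetric] mult.assoc)
      also have "8 * M * (V * r ^ DIM('a)) * (cU * ((4/\<epsilon>)\<^sup>2 * r powr (- \<alpha>))) = KK * M"
      proof -
        have "r ^ DIM('a) * r powr (- \<alpha>) = r powr (real DIM('a) - \<alpha>)"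
          using r by (simp add: powr_diff powr_realpow powr_minus divide_simps)
        then show ?thesis unfolding KK_def C_def
          by (simp add: algebra_simps)
      qed
      also have "KK * M = KK * s + e" unfolding M_def using KK by (simp add: algebra_simps)
      also have "ennreal (KK * s + e) = ennreal (KK * s) + ennreal e"
        using KK s0 e by (intro ennreal_plus) auto
      finally show ?thesis .
    qed
    have B1: "(\<integral>\<^sup>+ x. indicator (- A) x *
          (\<integral>\<^sup>+ y. indicator A y * ennreal (G x * (\<eta> y)\<^sup>2 * k x y) \<partial>lborel) \<partial>lborel)
         \<le> ennreal KK * S"
    proof -
      have "(\<integral>\<^sup>+ x. indicator (- A) x *
          (\<integral>\<^sup>+ y. indicator A y * ennreal (G x * (\<eta> y)\<^sup>2 * k x y) \<partial>lborel) \<partial>lborel)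
         \<le> ennreal (KK * s)"
        by (rule ennreal_le_epsilon) (rule main1)
      also have "\<dots> = ennreal KK * S" using KK Ss by (simp add: ennreal_mult')
      finally show ?thesis .
    qed
    have B2: "(\<integral>\<^sup>+ x. indicator (- A) x *
          (\<integral>\<^sup>+ y. indicator (annulus y0 r (\<epsilon> * r)) y * ennreal (G x * k x y) \<partial>lborel) \<partial>lborel)
       \<le> (\<integral>\<^sup>+ x. indicator (- A) x *
          (\<integral>\<^sup>+ y. indicator A y * ennreal (G x * (\<eta> y)\<^sup>2 * k x y) \<partial>lborel) \<partial>lborel)"
    proof (intro nn_integral_mono mult_left_mono)
      fix x y
      have sub: "annulus y0 r (\<epsilon> * r) \<subseteq> A"
        unfolding A_def annulus_def using \<open>0 < \<epsilon> * r\<close> by (auto simp: subset_eq)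
      show "indicator (annulus y0 r (\<epsilon> * r)) y * ennreal (G x * k x y)
          \<le> indicator A y * ennreal (G x * (\<eta> y)\<^sup>2 * k x y)"
        using sub \<eta>1[of y] by (auto simp: indicator_def)
    qed auto
    show "(\<integral>\<^sup>+ x. indicator (- annulus y0 (3 * r / 2) (\<epsilon> * r / 2)) x *
          (\<integral>\<^sup>+ y. indicator (annulus y0 (3 * r / 2) (\<epsilon> * r / 2)) y *
              ennreal (G x * (\<eta> y)\<^sup>2 * k x y) \<partial>lborel) \<partial>lborel)
         \<le> ennreal (C * r powr (real DIM('a) - \<alpha>)) *
            (SUP x\<in>annulus y0 (3 * r / 2) (\<epsilon> * r / 2). ennreal (G x))
     \<and>
       (\<integral>\<^sup>+ x. indicator (- annulus y0 (3 * r / 2) (\<epsilon> * r / 2)) x *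
          (\<integral>\<^sup>+ y. indicator (annulus y0 r (\<epsilon> * r)) y *
              ennreal (G x * k x y) \<partial>lborel) \<partial>lborel)
         \<le> ennreal (C * r powr (real DIM('a) - \<alpha>)) *
            (SUP x\<in>annulus y0 (3 * r / 2) (\<epsilon> * r / 2). ennreal (G x))"
      using B1 B2 unfolding A_def[symmetric] S_def[symmetric] KK_def[symmetric] by (meson order.trans)
  qed
qed

theorem mainTheorem15:
  fixes \<alpha>0 cl cU \<epsilon> :: real
  assumes dim: "DIM('a::euclidean_space) \<ge> 3"
    and "0 < \<alpha>0" and "0 < cl" and "0 < cU"
    and "0 < \<epsilon>" and "\<epsilon> < 1/2"
    and small_term: "\<And>\<alpha> (k :: 'a \<Rightarrow> 'a \<Rightarrow> real) \<Omega> G y0 r \<rho>.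
       \<alpha>0 \<le> \<alpha> \<Longrightarrow> \<alpha> < 2 \<Longrightarrow> kernel_std k \<Longrightarrow> cond_Ege cl \<alpha> k \<Longrightarrow> cond_U1 cU \<alpha> k \<Longrightarrow>
       bounded \<Omega> \<Longrightarrow> open \<Omega> \<Longrightarrow> y0 \<in> \<Omega> \<Longrightarrow> r < infdist y0 (frontier \<Omega>) \<Longrightarrow>
       0 < \<rho> \<Longrightarrow> ball y0 \<rho> \<subseteq> \<Omega> \<Longrightarrow> is_reg_green k \<Omega> y0 \<rho> G \<Longrightarrow>
       (\<integral>\<^sup>+ x. indicator (ball y0 (\<epsilon> * r)) x *
          (\<integral>\<^sup>+ y. indicator (- ball y0 r) y * ennreal (G x * k x y) \<partial>lborel) \<partial>lborel) \<le> 1/4"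
  shows "\<exists>C. \<forall>\<alpha> (k :: 'a \<Rightarrow> 'a \<Rightarrow> real) \<Omega> G y0 r \<rho> \<eta>.
       \<alpha>0 \<le> \<alpha> \<and> \<alpha> < 2 \<and> kernel_std k \<and> cond_Ege cl \<alpha> k \<and> cond_U1 cU \<alpha> k \<and>
       bounded \<Omega> \<and> open \<Omega> \<and> y0 \<in> \<Omega> \<and> r < infdist y0 (frontier \<Omega>) / 2 \<and>
       0 < \<rho> \<and> \<rho> < \<epsilon> * r / 2 \<and> is_reg_green k \<Omega> y0 \<rho> G \<and>
       smooth_fun \<eta> \<and> (\<forall>x. 0 \<le> \<eta> x \<and> \<eta> x \<le> 1) \<and>
       (\<forall>x\<in>annulus y0 r (\<epsilon> * r). \<eta> x = 1) \<and>
       (\<forall>x. x \<notin> annulus y0 (3 * r / 2) (\<epsilon> * r / 2) \<longrightarrow> \<eta> x = 0) \<and>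
       (\<forall>x. onorm (frechet_derivative \<eta> (at x)) \<le> 4 / \<epsilon> * r powr (-1))
     \<longrightarrow>
       (\<integral>\<^sup>+ x. indicator (- annulus y0 (3 * r / 2) (\<epsilon> * r / 2)) x *
          (\<integral>\<^sup>+ y. indicator (annulus y0 (3 * r / 2) (\<epsilon> * r / 2)) y *
              ennreal (G x * (\<eta> y)\<^sup>2 * k x y) \<partial>lborel) \<partial>lborel)
         \<le> ennreal (C * r powr (real DIM('a) - \<alpha>)) *
            (SUP x\<in>annulus y0 (3 * r / 2) (\<epsilon> * r / 2). ennreal (G x))
     \<and>
       (\<integral>\<^sup>+ x. indicator (- annulus y0 (3 * r / 2) (\<epsilon> * r / 2)) x *
          (\<integral>\<^sup>+ y. indicator (annulus y0 r (\<epsilon> * r)) y *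
              ennreal (G x * k x y) \<partial>lborel) \<partial>lborel)
         \<le> ennreal (C * r powr (real DIM('a) - \<alpha>)) *
            (SUP x\<in>annulus y0 (3 * r / 2) (\<epsilon> * r / 2). ennreal (G x))"
proof -
  obtain C where C: "\<forall>\<alpha> (k :: 'a \<Rightarrow> 'a \<Rightarrow> real) \<Omega> G y0 r \<rho> \<eta>.
       \<alpha> < 2 \<and> kernel_std k \<and> cond_U1 cU \<alpha> k \<and>
       y0 \<in> \<Omega> \<and> r < infdist y0 (frontier \<Omega>) / 2 \<and>
       0 < \<rho> \<and> \<rho> < \<epsilon> * r / 2 \<and> is_reg_green k \<Omega> y0 \<rho> G \<and>
       smooth_fun \<eta> \<and> (\<forall>x. 0 \<le> \<eta> x \<and> \<eta> x \<le> 1) \<and>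
       (\<forall>x\<in>annulus y0 r (\<epsilon> * r). \<eta> x = 1) \<and>
       (\<forall>x. x \<notin> annulus y0 (3 * r / 2) (\<epsilon> * r / 2) \<longrightarrow> \<eta> x = 0) \<and>
       (\<forall>x. onorm (frechet_derivative \<eta> (at x)) \<le> 4 / \<epsilon> * r powr (-1))
     \<longrightarrow>
       (\<integral>\<^sup>+ x. indicator (- annulus y0 (3 * r / 2) (\<epsilon> * r / 2)) x *
          (\<integral>\<^sup>+ y. indicator (annulus y0 (3 * r / 2) (\<epsilon> * r / 2)) y *
              ennreal (G x * (\<eta> y)\<^sup>2 * k x y) \<partial>lborel) \<partial>lborel)
         \<le> ennreal (C * r powr (real DIM('a) - \<alpha>)) *
            (SUP x\<in>annulus y0 (3 * r / 2) (\<epsilon> * r / 2). ennreal (G x))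
     \<and>
       (\<integral>\<^sup>+ x. indicator (- annulus y0 (3 * r / 2) (\<epsilon> * r / 2)) x *
          (\<integral>\<^sup>+ y. indicator (annulus y0 r (\<epsilon> * r)) y *
              ennreal (G x * k x y) \<partial>lborel) \<partial>lborel)
         \<le> ennreal (C * r powr (real DIM('a) - \<alpha>)) *
            (SUP x\<in>annulus y0 (3 * r / 2) (\<epsilon> * r / 2). ennreal (G x))"
    using final[OF \<open>0 < cU\<close> \<open>0 < \<epsilon>\<close> \<open>\<epsilon> < 1/2\<close>, where 'a='a] by blast
  show ?thesis
    apply (rule exI[of _ C])
    apply (intro allI impI)
    apply (rule C[rule_format])
    apply (elim conjE)
    apply (intro conjI)
    apply assumption+
    done
qed

end
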